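(* For every integer $n>2$, the finite model $\mathbb{S}^1_n$ of $S^1$ with $2n$ points satisfies $\mathrm{TC}(\mathbb{S}^1_n)\le 3$.
   Context: Finite spaces are finite $T_0$ topological spaces, identified with finite posets: $y\le x$ iff $y$ lies in every open set containing $x$; the minimal open neighborhood of $x$ is $x^\downarrow=\{y: y\le x\}$, and open sets are exactly the down-closed sets. For $n\ge 2$, $\mathbb{S}^1_n=\{x_0,\dots,x_{n-1},y_0,\dots,y_{n-1}\}$ is the finite space whose minimal open sets are $x_i^\downarrow=\{x_i\}$ and $y_i^\downarrow=\{y_i,x_i,x_{i-1 \bmod n}\}$ for $0\le i<n$. Topological complexity is unreduced: for a path-connected space $X$, with $X^I$ the space of paths $[0,1]\to X$ (compact-open topology) and $\pi:X^I\to X\times X$, $\pi(\gamma)=(\gamma(0),\gamma(1))$, $\mathrm{TC}(X)$ is the minimal $k$ such that $X\times X$ is covered by open sets $Q_1,\dots,Q_k$ each admitting a continuous map $s_i:Q_i\to X^I$ with $\pi\circ s_i$ the inclusion. *)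

theory Defs
  imports "HOL-Analysis.Analysis"
begin

(* Points of S^1_n: x_i is encoded as (i, False), y_i as (i, True), 0 <= i < n. *)
definition S1_points :: "nat \<Rightarrow> (nat \<times> bool) set" where
  "S1_points n = {(i, b). i < n}"

definition S1_minopen :: "nat \<Rightarrow> nat \<times> bool \<Rightarrow> (nat \<times> bool) set" where
  "S1_minopen n p = (if snd p then {(fst p, True), (fst p, False), ((fst p + n - 1) mod n, False)}
                     else {(fst p, False)})"

(* the finite space S^1_n: open sets are the sets containing the minimal open
   neighbourhood of each of their points (= down-closed sets) *)
definition S1 :: "nat \<Rightarrow> (nat \<times> bool) topology" where
  "S1 n = topology (\<lambda>U. U \<subseteq> S1_points n \<and> (\<forall>p\<in>U. S1_minopen n p \<subseteq> U))"

lemma istopology_S1: "istopology (\<lambda>U. U \<subseteq> S1_points n \<and> (\<forall>p\<in>U. S1_minopen n p \<subseteq> U))"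
  unfolding istopology_def by blast

abbreviation unit_I :: "real topology" where
  "unit_I \<equiv> top_of_set {0..1}"

definition paths :: "'a topology \<Rightarrow> (real \<Rightarrow> 'a) set" where
  "paths X = {f. continuous_map unit_I X f \<and> f \<in> extensional {0..1}}"

definition path_space :: "'a topology \<Rightarrow> (real \<Rightarrow> 'a) topology" where
  "path_space X = topology_generated_by
     {{f \<in> paths X. f ` K \<subseteq> U} | K U. compactin unit_I K \<and> openin X U}"

definition has_motion_planner :: "'a topology \<Rightarrow> ('a \<times> 'a) set \<Rightarrow> bool" where
  "has_motion_planner X Q \<longleftrightarrow>
     openin (prod_topology X X) Q \<and>
     (\<exists>s. continuous_map (subtopology (prod_topology X X) Q) (path_space X) s \<and>
          (\<forall>p\<in>Q. s p 0 = fst p \<and> s p 1 = snd p))"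

(* unreduced topological complexity *)
definition TC :: "'a topology \<Rightarrow> nat" where
  "TC X = (LEAST k. \<exists>Q :: nat \<Rightarrow> ('a \<times> 'a) set.
             (\<forall>i<k. has_motion_planner X (Q i)) \<and>
             topspace X \<times> topspace X \<subseteq> (\<Union>i<k. Q i))"

end

theory Submission
  imports Defs
begin


definition R :: "nat \<Rightarrow> nat \<Rightarrow> bool" where
  "R r' r \<longleftrightarrow> r' = r \<or> (odd r \<and> (r' = r + 1 \<or> r' + 1 = r))"

definition rho :: "nat \<Rightarrow> nat \<Rightarrow> nat \<Rightarrow> nat \<Rightarrow> nat" where
  "rho n j a b = (if j \<le> 2*n-1 then min a (2*n-1-j) else min b (j-(2*n-1)))"

definition off :: "nat \<Rightarrow> nat \<Rightarrow> nat \<Rightarrow> nat" where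
  "off n k i = (if k \<le> i then i - k else i + n - k)"

definition code :: "nat \<Rightarrow> nat \<Rightarrow> nat \<times> bool \<Rightarrow> nat" where
  "code n k p = (if snd p then 2 * off n k (fst p) - 1 else 2 * off n k (fst p))"

definition decode :: "nat \<Rightarrow> nat \<Rightarrow> nat \<Rightarrow> nat \<times> bool" where
  "decode n k r = (if k + (r+1) div 2 < n then k + (r+1) div 2 else k + (r+1) div 2 - n, odd r)"

lemma r1: "n \<ge> 1 \<Longrightarrow> a \<le> 2*n-2 \<Longrightarrow> rho n 0 a b = a"
  unfolding rho_def by auto
lemma r2: "n \<ge> 1 \<Longrightarrow> b \<le> 2*n-2 \<Longrightarrow> rho n (4*n-2) a b = b"
  unfolding rho_def by auto
lemma r3: "a \<le> 2*n-2 \<Longrightarrow> b \<le> 2*n-2 \<Longrightarrow> rho n j a b \<le> 2*n-2"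
  unfolding rho_def by auto
lemma Rmin: "R a' a \<Longrightarrow> R (min a' m) (min a m)"
  unfolding R_def min_def by auto

lemma Rstep: "even m \<Longrightarrow> R (min a m) (min a (m+1)) \<and> R (min a m) (min a (m-1))"
  unfolding R_def min_def by (auto; presburger)

lemma r4: "n \<ge> 1 \<Longrightarrow> odd j \<Longrightarrow> j < 4*n-2 \<Longrightarrow>
   R (rho n j a b) (rho n (j-1) a b) \<and> R (rho n j a b) (rho n (j+1) a b)"
proof -
  assume a: "n \<ge> 1" "odd j" "j < 4*n-2"
  consider "j + 1 \<le> 2*n-1" | "j = 2*n-1" | "j > 2*n-1" using a by linarith
  then show ?thesis
  proof cases
    case 1
    define m where "m = 2*n-1-j"
    have "even m" using a 1 unfolding m_def by auto
    have e: "2*n-1-(j-1) = m+1" "2*n-1-(j+1) = m-1" using 1 a unfolding m_def by auto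
    have "rho n j a b = min a m" using 1 unfolding rho_def m_def by auto
    have "rho n (j-1) a b = min a (2*n-1-(j-1))" unfolding rho_def by (rule if_P) (use 1 in arith)
    then have "rho n (j-1) a b = min a (m+1)" unfolding e .
    have "rho n (j+1) a b = min a (2*n-1-(j+1))" unfolding rho_def by (rule if_P) (use 1 in arith)
    then have "rho n (j+1) a b = min a (m-1)" unfolding e .
    note this \<open>rho n (j-1) a b = min a (m+1)\<close> \<open>rho n j a b = min a m\<close>
    then show ?thesis using Rstep[OF \<open>even m\<close>, of a] by simp
  next
    case 2
    have "rho n j a b = 0" "rho n (j-1) a b = min a 1" "rho n (j+1) a b = min b 1"
      using 2 a unfolding rho_def by auto
    then show ?thesis unfolding R_def min_def by auto
  next
    case 3
    define m where "m = j-(2*n-1)"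
    have "even m" using a 3 unfolding m_def by auto
    have "m \<ge> 2" using a 3 `even m` unfolding m_def by presburger
    have e: "(j-1)-(2*n-1) = m-1" "(j+1)-(2*n-1) = m+1" using 3 a unfolding m_def by auto
    have "rho n j a b = min b m" using 3 unfolding rho_def m_def by auto
    have "rho n (j-1) a b = min b ((j-1)-(2*n-1))" unfolding rho_def by (rule if_not_P) (use 3 `m \<ge> 2` m_def in arith)
    then have "rho n (j-1) a b = min b (m-1)" unfolding e .
    have "rho n (j+1) a b = min b ((j+1)-(2*n-1))" unfolding rho_def by (rule if_not_P) (use 3 in arith)
    then have "rho n (j+1) a b = min b (m+1)" unfolding e .
    note this \<open>rho n (j-1) a b = min b (m-1)\<close> \<open>rho n j a b = min b m\<close>
    then show ?thesis using Rstep[OF \<open>even m\<close>, of b] by simp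
  qed
qed

lemma r5: "R a' a \<Longrightarrow> R b' b \<Longrightarrow> R (rho n j a' b') (rho n j a b)"
  unfolding rho_def using Rmin by auto

lemma minopen_eq: "i < n \<Longrightarrow> S1_minopen n (i,b) =
  (if b then {(i,True),(i,False),(if i=0 then n-1 else i-1, False)} else {(i,False)})"
proof -
  assume "i < n"
  have "(i + n - 1) mod n = (if i=0 then n-1 else i-1)"
  proof (cases "i = 0")
    case True then show ?thesis using \<open>i<n\<close> by simp
  next
    case False
    then have "i + n - 1 = (i - 1) + n" by simp
    then have "(i + n - 1) mod n = (i - 1) mod n" by simp
    then show ?thesis using False \<open>i<n\<close> by simp
  qed
  then show ?thesis unfolding S1_minopen_def by simp
qed

lemma c1: "k < n \<Longrightarrow> i < n \<Longrightarrow> (i,b) \<noteq> (k,True) \<Longrightarrow> code n k (i,b) \<le> 2*n-2"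
  unfolding code_def off_def by auto

lemma c2: "k < n \<Longrightarrow> i < n \<Longrightarrow> (i,b) \<noteq> (k,True) \<Longrightarrow> decode n k (code n k (i,b)) = (i,b)"
proof -
  assume a: "k < n" "i < n" "(i,b) \<noteq> (k,True)"
  show ?thesis
  proof (cases b)
    case True
    then have "i \<noteq> k" using a by auto
    show ?thesis
    proof (cases "k \<le> i")
      case True
      then have "code n k (i,b) = 2*(i-k) - 1" using \<open>b\<close> by (simp add: code_def off_def)
      moreover have "(2*(i-k) - 1 + 1) div 2 = i - k" using True \<open>i\<noteq>k\<close> by simp
      moreover have "odd (2*(i-k) - 1)" using True \<open>i\<noteq>k\<close> by simp
      ultimately show ?thesis using True a \<open>b\<close> by (simp add: decode_def)
    next
      case False
      then have "code n k (i,b) = 2*(i+n-k) - 1" using \<open>b\<close> by (simp add: code_def off_def)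
      moreover have "(2*(i+n-k) - 1 + 1) div 2 = i + n - k" using False a by simp
      moreover have "odd (2*(i+n-k) - 1)" using False a by simp
      ultimately show ?thesis using False a \<open>b\<close> by (simp add: decode_def)
    qed
  next
    case False
    show ?thesis
    proof (cases "k \<le> i")
      case True
      then have "code n k (i,b) = 2*(i-k)" using \<open>\<not>b\<close> by (simp add: code_def off_def)
      moreover have "(2*(i-k) + 1) div 2 = i - k" by simp
      ultimately show ?thesis using True a \<open>\<not>b\<close> by (simp add: decode_def)
    next
      case F2: False
      then have "code n k (i,b) = 2*(i+n-k)" using \<open>\<not>b\<close> by (simp add: code_def off_def)
      moreover have "(2*(i+n-k) + 1) div 2 = i + n - k" by simp
      ultimately show ?thesis using F2 a \<open>\<not>b\<close> by (simp add: decode_def)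
    qed
  qed
qed

lemma c3: "k < n \<Longrightarrow> r \<le> 2*n-2 \<Longrightarrow> fst (decode n k r) < n \<and> decode n k r \<noteq> (k,True)"
  unfolding decode_def by auto presburger+

lemma c4: "k < n \<Longrightarrow> r \<le> 2*n-2 \<Longrightarrow> R r' r \<Longrightarrow> decode n k r' \<in> S1_minopen n (decode n k r)"
proof -
  assume a: "k < n" "r \<le> 2*n-2" "R r' r"
  consider "r' = r" | "odd r" "r' = r + 1" | "odd r" "r' + 1 = r" using a unfolding R_def by blast
  then show ?thesis
  proof cases
    case 1 then show ?thesis by (cases "decode n k r") (auto simp: S1_minopen_def)
  next
    case 2
    have "(r'+1) div 2 = (r+1) div 2" using 2 by presburger
    then have "decode n k r' = (fst (decode n k r), False)" "snd (decode n k r)"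
      using 2 unfolding decode_def by auto
    then show ?thesis unfolding S1_minopen_def by auto
  next
    case 3
    define e where "e = (r+1) div 2"
    have e1: "e \<ge> 1" "e \<le> n - 1" using 3 a unfolding e_def by presburger+
    have e2: "(r'+1) div 2 = e - 1" using 3 unfolding e_def by presburger
    define i where "i = fst (decode n k r)"
    have i: "i = (if k + e < n then k + e else k + e - n)" unfolding i_def decode_def e_def by simp
    have "i < n" using i e1 a by auto
    have dr: "decode n k r = (i, True)" using 3 i unfolding decode_def e_def by simp
    have "fst (decode n k r') = (if i=0 then n-1 else i-1)"
      using i e1 e2 a unfolding decode_def by auto
    moreover have "\<not> snd (decode n k r')" using 3 unfolding decode_def by simp presburger
    ultimately have "decode n k r' = (if i=0 then n-1 else i-1, False)"
      by (metis prod.collapse)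
    then show ?thesis using dr minopen_eq[OF \<open>i<n\<close>] by simp
  qed
qed

lemma off_prev: "k < n \<Longrightarrow> i < n \<Longrightarrow> i \<noteq> k \<Longrightarrow> off n k (if i=0 then n-1 else i-1) = off n k i - 1"
  unfolding off_def by auto

lemma off_pos: "k < n \<Longrightarrow> i < n \<Longrightarrow> i \<noteq> k \<Longrightarrow> off n k i \<ge> 1"
  unfolding off_def by auto

lemma c5: "k < n \<Longrightarrow> i < n \<Longrightarrow> (i,b) \<noteq> (k,True) \<Longrightarrow>
   (i',b') \<in> S1_minopen n (i,b) \<Longrightarrow> R (code n k (i',b')) (code n k (i,b))"
proof -
  assume a: "k < n" "i < n" "(i,b) \<noteq> (k,True)" "(i',b') \<in> S1_minopen n (i,b)"
  show ?thesis
  proof (cases b)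
    case False then show ?thesis using a minopen_eq[OF a(2)] unfolding R_def by auto
  next
    case True
    then have "i \<noteq> k" using a by auto
    have p: "off n k i \<ge> 1" using off_pos[OF a(1,2) \<open>i\<noteq>k\<close>] .
    have c: "code n k (i,b) = 2 * off n k i - 1" using True unfolding code_def by simp
    have o: "odd (2 * off n k i - 1)" using p by presburger
    consider "(i',b') = (i,True)" | "(i',b') = (i,False)" | "(i',b') = (if i=0 then n-1 else i-1, False)"
      using a(4) minopen_eq[OF a(2)] True by auto
    then show ?thesis
    proof cases
      case 1 then show ?thesis using True unfolding R_def by simp
    next
      case 2 then have "code n k (i',b') = 2 * off n k i" unfolding code_def by simp
      then show ?thesis using c o p unfolding R_def by simp
    next
      case 3 then have "code n k (i',b') = 2 * (off n k i - 1)" using off_prev[OF a(1,2) \<open>i\<noteq>k\<close>]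
        unfolding code_def by simp
      then show ?thesis using c o p unfolding R_def by (simp; arith)
    qed
  qed
qed


lemma openin_S1: "openin (S1 n) U \<longleftrightarrow> U \<subseteq> S1_points n \<and> (\<forall>p\<in>U. S1_minopen n p \<subseteq> U)"
  unfolding S1_def using istopology_S1 by simp

lemma minopen_refl: "p \<in> S1_minopen n p"
  by (cases p) (auto simp: S1_minopen_def)

lemma minopen_points: "n > 0 \<Longrightarrow> p \<in> S1_points n \<Longrightarrow> S1_minopen n p \<subseteq> S1_points n"
  unfolding S1_minopen_def S1_points_def by auto

lemma minopen_trans: "q \<in> S1_minopen n p \<Longrightarrow> S1_minopen n q \<subseteq> S1_minopen n p"
  unfolding S1_minopen_def by (auto split: if_splits)

lemma topspace_S1: "n > 0 \<Longrightarrow> topspace (S1 n) = S1_points n"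
proof
  show "topspace (S1 n) \<subseteq> S1_points n" using openin_topspace[of "S1 n"] openin_S1 by blast
  assume "n > 0"
  then have "openin (S1 n) (S1_points n)" using minopen_points openin_S1 by blast
  then show "S1_points n \<subseteq> topspace (S1 n)" by (rule openin_subset)
qed

lemma open_minopen: "n>0 \<Longrightarrow> p \<in> S1_points n \<Longrightarrow> openin (S1 n) (S1_minopen n p)"
  unfolding openin_S1 using minopen_points minopen_trans by blast

definition le2 :: "nat \<Rightarrow> (nat \<times> bool) \<times> (nat \<times> bool) \<Rightarrow> (nat \<times> bool) \<times> (nat \<times> bool) \<Rightarrow> bool" where
  "le2 n q' q \<longleftrightarrow> fst q' \<in> S1_minopen n (fst q) \<and> snd q' \<in> S1_minopen n (snd q)"

lemma open_prod_down:
  assumes "n > 0" "D \<subseteq> S1_points n \<times> S1_points n" "\<And>q q'. q \<in> D \<Longrightarrow> le2 n q' q \<Longrightarrow> q' \<in> D"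
  shows "openin (prod_topology (S1 n) (S1 n)) D"
proof (subst openin_subopen, intro ballI)
  fix q assume "q \<in> D"
  then have q: "fst q \<in> S1_points n" "snd q \<in> S1_points n" using assms(2) by auto
  show "\<exists>T. openin (prod_topology (S1 n) (S1 n)) T \<and> q \<in> T \<and> T \<subseteq> D"
    apply (rule exI[of _ "S1_minopen n (fst q) \<times> S1_minopen n (snd q)"])
    using open_minopen[OF assms(1) q(1)] open_minopen[OF assms(1) q(2)] minopen_refl assms(3)[OF \<open>q\<in>D\<close>]
    by (auto simp: openin_prod_Times_iff le2_def mem_Times_iff)
qed

definition idx :: "nat \<Rightarrow> real \<Rightarrow> nat" where
  "idx L t = (let m = nat \<lfloor>t * real L\<rfloor> in if odd m then m else if t * real L = real m then m else m + 1)"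

lemma idx_props:
  assumes "L > 0" "even L" "0 \<le> t" "t \<le> 1"
  shows "idx L t \<le> L \<and> (even (idx L t) \<longrightarrow> t * real L = real (idx L t)) \<and>
     (odd (idx L t) \<longrightarrow> real (idx L t) - 1 < t * real L \<and> t * real L < real (idx L t) + 1)"
proof -
  define m where "m = nat \<lfloor>t * real L\<rfloor>"
  have tl0: "0 \<le> t * real L" using assms by simp
  have "t * real L \<le> 1 * real L" by (rule mult_right_mono) (use assms in auto)
  then have tl1: "t * real L \<le> real L" by simp
  have rm: "real m = of_int \<lfloor>t * real L\<rfloor>" using tl0 unfolding m_def by simp
  have m1: "real m \<le> t * real L" "t * real L < real m + 1" using rm by auto
  have mL: "m \<le> L" using m1 tl1 by linarith
  show ?thesis
  proof (cases "odd m")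
    case True
    then have "idx L t = m" unfolding idx_def m_def[symmetric] by simp
    then show ?thesis using True m1 mL by auto
  next
    case False
    show ?thesis
    proof (cases "t * real L = real m")
      case True
      then have "idx L t = m" using False unfolding idx_def m_def[symmetric] by simp
      then show ?thesis using True False mL by auto
    next
      case F2: False
      then have i: "idx L t = m + 1" using False unfolding idx_def m_def[symmetric] by simp
      have "real m < t * real L" using F2 m1 by auto
      then have "m < L" using tl1 by linarith
      then show ?thesis using i False m1 \<open>real m < t * real L\<close> by auto
    qed
  qed
qed

lemma idx0: "L>0 \<Longrightarrow> idx L 0 = 0" by (simp add: idx_def)
lemma idx1: "L>0 \<Longrightarrow> even L \<Longrightarrow> idx L 1 = L" by (simp add: idx_def)

lemma nat_close: "real (a::nat) < real b + 1 \<Longrightarrow> a \<le> b"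
  by (metis of_nat_1 of_nat_add of_nat_less_iff less_Suc_eq_le add.commute plus_1_eq_Suc)
lemma nat_close2: "real (a::nat) < real b + 2 \<Longrightarrow> a \<le> b + 1"
proof -
  assume "real a < real b + 2"
  then have "real a < real (b+1) + 1" by simp
  then show ?thesis by (rule nat_close)
qed

lemma path_nbhd:
  assumes L: "L > 0" "even L"
    and v: "\<And>j. odd j \<Longrightarrow> j < L \<Longrightarrow> v j \<in> S1_minopen n (v (j-1)) \<and> v j \<in> S1_minopen n (v (j+1))"
    and t: "0 \<le> t" "t \<le> 1"
  shows "\<exists>e>0. \<forall>t'. 0 \<le> t' \<and> t' \<le> 1 \<and> dist t' t < e \<longrightarrow> v (idx L t') \<in> S1_minopen n (v (idx L t))"
proof -
  define j where "j = idx L t"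
  have P: "j \<le> L" "even j \<Longrightarrow> t * real L = real j" "odd j \<Longrightarrow> real j - 1 < t * real L \<and> t * real L < real j + 1"
    using idx_props[OF L t] unfolding j_def by auto
  have Lpos: "real L > 0" using L by simp
  have scale: "\<bar>t' * real L - t * real L\<bar> < d * real L" if "dist t' t < d" for t' d
  proof -
    have "t' * real L - t * real L = (t' - t) * real L" by algebra
    then have "\<bar>t' * real L - t * real L\<bar> = \<bar>t' - t\<bar> * real L" by (simp add: abs_mult)
    also have "\<dots> < d * real L" using that Lpos by (simp add: dist_real_def)
    finally show ?thesis .
  qed
  show ?thesis
  proof (cases "even j")
    case True
    show ?thesis
    proof (intro exI[of _ "1 / real L"] conjI allI impI)
      show "1 / real L > 0" using Lpos by simp
      fix t' assume a: "0 \<le> t' \<and> t' \<le> 1 \<and> dist t' t < 1 / real L"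
      define j' where "j' = idx L t'"
      have P': "j' \<le> L" "even j' \<Longrightarrow> t' * real L = real j'" "odd j' \<Longrightarrow> real j' - 1 < t' * real L \<and> t' * real L < real j' + 1"
        using idx_props[OF L, of t'] a unfolding j'_def by auto
      have d: "\<bar>t' * real L - t * real L\<bar> < 1" using scale[of t' "1 / real L"] a Lpos by simp
      show "v (idx L t') \<in> S1_minopen n (v (idx L t))"
        unfolding j'_def[symmetric] j_def[symmetric]
      proof (cases "even j'")
        case True
        then have "real j' < real j + 1" "real j < real j' + 1" using d P(2) P'(2) \<open>even j\<close> by auto
        then have "j' = j" using nat_close by (meson antisym)
        then show "v j' \<in> S1_minopen n (v j)" by (simp add: minopen_refl)
      next
        case False
        then have "real j' < real j + 2" "real j < real j' + 2" using d P(2) P'(3) \<open>even j\<close> by auto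
        then have "j' \<le> j + 1" "j \<le> j' + 1" using nat_close2 by auto
        then have "j' = j + 1 \<or> j' + 1 = j" using False \<open>even j\<close> by presburger
        moreover have "j' < L" using P'(1) False L by (metis le_neq_implies_less)
        ultimately show "v j' \<in> S1_minopen n (v j)" using v[OF False] by auto
      qed
    qed
  next
    case False
    define e where "e = min (t * real L - (real j - 1)) (real j + 1 - t * real L) / real L"
    have epos: "e > 0" unfolding e_def using P(3)[OF False] Lpos by simp
    show ?thesis
    proof (intro exI[of _ e] conjI allI impI)
      show "e > 0" by (rule epos)
      fix t' assume a: "0 \<le> t' \<and> t' \<le> 1 \<and> dist t' t < e"
      define j' where "j' = idx L t'"
      have P': "j' \<le> L" "even j' \<Longrightarrow> t' * real L = real j'" "odd j' \<Longrightarrow> real j' - 1 < t' * real L \<and> t' * real L < real j' + 1"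
        using idx_props[OF L, of t'] a unfolding j'_def by auto
      have d: "\<bar>t' * real L - t * real L\<bar> < e * real L" using scale[of t' e] a by simp
      have "e * real L = min (t * real L - (real j - 1)) (real j + 1 - t * real L)"
        unfolding e_def using Lpos by simp
      then have r: "real j - 1 < t' * real L" "t' * real L < real j + 1" using d by auto
      show "v (idx L t') \<in> S1_minopen n (v (idx L t))"
        unfolding j'_def[symmetric] j_def[symmetric]
      proof (cases "even j'")
        case True
        then have "real j' < real j + 1" "real j < real j' + 1" using r P'(2) by auto
        then have "j' = j" using nat_close by (meson antisym)
        then show "v j' \<in> S1_minopen n (v j)" using True False by simp
      next
        case F2: False
        then have "real j' < real j + 2" "real j < real j' + 2" using r P'(3) by auto
        then have "j' \<le> j + 1" "j \<le> j' + 1" using nat_close2 by auto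
        then have "j' = j" using False F2 by presburger
        then show "v j' \<in> S1_minopen n (v j)" by (simp add: minopen_refl)
      qed
    qed
  qed
qed

lemma path_cont:
  assumes "n>0" "L > 0" "even L"
    and v: "\<And>j. odd j \<Longrightarrow> j < L \<Longrightarrow> v j \<in> S1_minopen n (v (j-1)) \<and> v j \<in> S1_minopen n (v (j+1))"
    and vp: "\<And>j. j \<le> L \<Longrightarrow> v j \<in> S1_points n"
  shows "continuous_map unit_I (S1 n) (\<lambda>t. v (idx L t))"
  unfolding continuous_map
proof (intro conjI allI impI)
  show "(\<lambda>t. v (idx L t)) ` topspace unit_I \<subseteq> topspace (S1 n)"
    using idx_props[OF assms(2,3)] vp topspace_S1[OF assms(1)] by auto
  fix U assume "openin (S1 n) U"
  then have U: "\<And>p q. p \<in> U \<Longrightarrow> q \<in> S1_minopen n p \<Longrightarrow> q \<in> U" using openin_S1 by blast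
  show "openin unit_I {x \<in> topspace unit_I. v (idx L x) \<in> U}"
    unfolding openin_euclidean_subtopology_iff
  proof (intro conjI ballI)
    show "{x \<in> topspace unit_I. v (idx L x) \<in> U} \<subseteq> {0..1}" by auto
    fix x assume "x \<in> {x \<in> topspace unit_I. v (idx L x) \<in> U}"
    then have x: "0 \<le> x" "x \<le> 1" "v (idx L x) \<in> U" by auto
    obtain e where "e > 0" and e: "\<forall>t'. 0 \<le> t' \<and> t' \<le> 1 \<and> dist t' x < e \<longrightarrow> v (idx L t') \<in> S1_minopen n (v (idx L x))"
      using path_nbhd[OF assms(2,3) v x(1,2)] by blast
    show "\<exists>e>0. \<forall>x'\<in>{0..1}. dist x' x < e \<longrightarrow> x' \<in> {x \<in> topspace unit_I. v (idx L x) \<in> U}"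
    proof (intro exI[of _ e] conjI ballI impI)
      show "e > 0" by (rule \<open>e>0\<close>)
      fix x' assume x': "x' \<in> {0..1}" "dist x' x < e"
      then have "v (idx L x') \<in> S1_minopen n (v (idx L x))" using e by auto
      then have "v (idx L x') \<in> U" using U x(3) by blast
      then show "x' \<in> {x \<in> topspace unit_I. v (idx L x) \<in> U}" using x' by auto
    qed
  qed
qed

definition spath :: "nat \<Rightarrow> (nat \<Rightarrow> 'q \<Rightarrow> nat \<times> bool) \<Rightarrow> 'q \<Rightarrow> real \<Rightarrow> nat \<times> bool" where
  "spath L v q = (\<lambda>t. if t \<in> {0..1} then v (idx L t) q else undefined)"

lemma planner:
  fixes L :: nat and v :: "nat \<Rightarrow> (nat \<times> bool) \<times> (nat \<times> bool) \<Rightarrow> nat \<times> bool"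
  assumes "n>0" "L>0" "even L"
    and W: "W \<subseteq> S1_points n \<times> S1_points n" "\<And>q q'. q \<in> W \<Longrightarrow> le2 n q' q \<Longrightarrow> q' \<in> W"
    and ends: "\<And>q. q \<in> W \<Longrightarrow> v 0 q = fst q \<and> v L q = snd q"
    and pts: "\<And>q j. q \<in> W \<Longrightarrow> j \<le> L \<Longrightarrow> v j q \<in> S1_points n"
    and step: "\<And>q j. q \<in> W \<Longrightarrow> odd j \<Longrightarrow> j < L \<Longrightarrow> v j q \<in> S1_minopen n (v (j-1) q) \<and> v j q \<in> S1_minopen n (v (j+1) q)"
    and mono: "\<And>q q' j. q \<in> W \<Longrightarrow> le2 n q' q \<Longrightarrow> j \<le> L \<Longrightarrow> v j q' \<in> S1_minopen n (v j q)"
  shows "has_motion_planner (S1 n) W"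
  unfolding has_motion_planner_def
proof (intro conjI exI)
  show "openin (prod_topology (S1 n) (S1 n)) W" by (rule open_prod_down) (use assms in auto)
  have paths: "spath L v q \<in> paths (S1 n)" if "q \<in> W" for q
  proof -
    have "continuous_map unit_I (S1 n) (\<lambda>t. v (idx L t) q)"
      by (rule path_cont[OF assms(1-3)]) (use that step pts in auto)
    then have "continuous_map unit_I (S1 n) (spath L v q)"
      by (rule continuous_map_eq) (simp add: spath_def)
    moreover have "spath L v q \<in> extensional {0..1}" by (simp add: spath_def extensional_def)
    ultimately show ?thesis by (simp add: paths_def)
  qed
  show "\<forall>p\<in>W. spath L v p 0 = fst p \<and> spath L v p 1 = snd p"
    using ends idx0 idx1 assms by (simp add: spath_def)
  show "continuous_map (subtopology (prod_topology (S1 n) (S1 n)) W) (path_space (S1 n)) (spath L v)"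
    unfolding path_space_def
  proof (rule continuous_on_generated_topo)
    have ts: "topspace (subtopology (prod_topology (S1 n) (S1 n)) W) = W"
      using W(1) topspace_S1[OF assms(1)] by auto
    fix U assume "U \<in> {{f \<in> paths (S1 n). f ` K \<subseteq> V} |K V. compactin unit_I K \<and> openin (S1 n) V}"
    then obtain K V where U: "U = {f \<in> paths (S1 n). f ` K \<subseteq> V}" and K: "compactin unit_I K"
      and V: "openin (S1 n) V" by blast
    have K01: "K \<subseteq> {0..1}" using compactin_subset_topspace[OF K] by simp
    have eq: "spath L v -` U \<inter> topspace (subtopology (prod_topology (S1 n) (S1 n)) W) = {q \<in> W. spath L v q ` K \<subseteq> V}"
      using paths unfolding U ts by auto
    have "openin (prod_topology (S1 n) (S1 n)) {q \<in> W. spath L v q ` K \<subseteq> V}"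
    proof (rule open_prod_down[OF assms(1)])
      show "{q \<in> W. spath L v q ` K \<subseteq> V} \<subseteq> S1_points n \<times> S1_points n" using W(1) by auto
      fix q q' assume q: "q \<in> {q \<in> W. spath L v q ` K \<subseteq> V}" and le: "le2 n q' q"
      have "q' \<in> W" using W(2)[of q q'] q le by blast
      moreover have "spath L v q' ` K \<subseteq> V"
      proof
        fix p assume "p \<in> spath L v q' ` K"
        then obtain t where "t \<in> K" "p = spath L v q' t" by auto
        then have t01: "0 \<le> t" "t \<le> 1" using K01 by auto
        have "spath L v q t \<in> V" using q \<open>t\<in>K\<close> by auto
        moreover have "p \<in> S1_minopen n (spath L v q t)"
          using mono[of q q' "idx L t"] q le idx_props[OF assms(2,3) t01] \<open>p = spath L v q' t\<close> t01
          by (simp add: spath_def)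
        ultimately show "p \<in> V" using V openin_S1 by blast
      qed
      ultimately show "q' \<in> {q \<in> W. spath L v q ` K \<subseteq> V}" by simp
    qed
    then show "openin (subtopology (prod_topology (S1 n) (S1 n)) W)
          (spath L v -` U \<inter> topspace (subtopology (prod_topology (S1 n) (S1 n)) W))"
      unfolding eq openin_subtopology by (intro exI[of _ "{q \<in> W. spath L v q ` K \<subseteq> V}"]) auto
  next
    show "spath L v ` topspace (subtopology (prod_topology (S1 n) (S1 n)) W)
      \<subseteq> \<Union> {{f \<in> paths (S1 n). f ` K \<subseteq> V} |K V. compactin unit_I K \<and> openin (S1 n) V}"
    proof
      fix f assume "f \<in> spath L v ` topspace (subtopology (prod_topology (S1 n) (S1 n)) W)"
      then obtain q where "q \<in> W" "f = spath L v q" by auto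
      then have "f \<in> {f \<in> paths (S1 n). f ` {} \<subseteq> {}}" using paths by auto
      moreover have "compactin unit_I {}" "openin (S1 n) {}" by auto
      ultimately show "f \<in> \<Union> {{f \<in> paths (S1 n). f ` K \<subseteq> V} |K V. compactin unit_I K \<and> openin (S1 n) V}"
        by blast
    qed
  qed
qed



definition Carc :: "nat \<Rightarrow> nat \<Rightarrow> (nat \<times> bool) set" where
  "Carc n k = S1_points n - {(k,True)}"

definition vk :: "nat \<Rightarrow> nat \<Rightarrow> nat \<Rightarrow> (nat \<times> bool) \<times> (nat \<times> bool) \<Rightarrow> nat \<times> bool" where
  "vk n k j q = decode n k (rho n j (code n k (fst q)) (code n k (snd q)))"

lemma Carc_down: "p \<in> Carc n k \<Longrightarrow> p' \<in> S1_minopen n p \<Longrightarrow> n > 0 \<Longrightarrow> p' \<in> Carc n k"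
  using minopen_points[of n p] unfolding Carc_def S1_minopen_def by (cases p) (auto split: if_splits)

lemma Carc_E: "p \<in> Carc n k \<Longrightarrow> fst p < n \<and> p \<noteq> (k,True)"
  unfolding Carc_def S1_points_def by auto

lemma code_le: "k < n \<Longrightarrow> p \<in> Carc n k \<Longrightarrow> code n k p \<le> 2*n-2"
  using c1[of k n "fst p" "snd p"] Carc_E[of p n k] by simp

lemma decode_code: "k < n \<Longrightarrow> p \<in> Carc n k \<Longrightarrow> decode n k (code n k p) = p"
  using c2[of k n "fst p" "snd p"] Carc_E[of p n k] by simp

lemma decode_pt: "k < n \<Longrightarrow> r \<le> 2*n-2 \<Longrightarrow> decode n k r \<in> S1_points n"
  using c3[of k n r] unfolding S1_points_def by (cases "decode n k r") auto

lemma code_R: "k < n \<Longrightarrow> p \<in> Carc n k \<Longrightarrow> p' \<in> S1_minopen n p \<Longrightarrow> R (code n k p') (code n k p)"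
  using c5[of k n "fst p" "snd p" "fst p'" "snd p'"] Carc_E[of p n k] by simp

lemma arc_planner:
  assumes "n > 0" "k < n"
  shows "has_motion_planner (S1 n) (Carc n k \<times> Carc n k)"
proof (rule planner[where L = "4*n-2" and v = "vk n k"])
  show "0 < n" "0 < 4*n-2" "even (4*n-2)" using assms by auto
  show "Carc n k \<times> Carc n k \<subseteq> S1_points n \<times> S1_points n" unfolding Carc_def by auto
  show "q' \<in> Carc n k \<times> Carc n k" if "q \<in> Carc n k \<times> Carc n k" "le2 n q' q" for q q'
    using that Carc_down[of "fst q" n k "fst q'"] Carc_down[of "snd q" n k "snd q'"] assms
    unfolding le2_def by (auto simp: mem_Times_iff)
  fix q assume q: "q \<in> Carc n k \<times> Carc n k"
  then have qa: "fst q \<in> Carc n k" "snd q \<in> Carc n k" by (auto simp: mem_Times_iff)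
  have ca: "code n k (fst q) \<le> 2*n-2" "code n k (snd q) \<le> 2*n-2"
    using code_le[OF assms(2) qa(1)] code_le[OF assms(2) qa(2)] by auto
  show "vk n k 0 q = fst q \<and> vk n k (4*n-2) q = snd q"
    unfolding vk_def using r1[of n, OF _ ca(1)] r2[of n, OF _ ca(2)] assms decode_code[OF assms(2) qa(1)]
      decode_code[OF assms(2) qa(2)] by simp
  have rb: "rho n j (code n k (fst q)) (code n k (snd q)) \<le> 2*n-2" for j
    using r3[OF ca] .
  show "vk n k j q \<in> S1_points n" for j
    unfolding vk_def using decode_pt[OF assms(2) rb] .
  show "vk n k j q \<in> S1_minopen n (vk n k (j-1) q) \<and> vk n k j q \<in> S1_minopen n (vk n k (j+1) q)"
    if "odd j" "j < 4*n-2" for j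
    unfolding vk_def using r4[of n j "code n k (fst q)" "code n k (snd q)"] that assms
      c4[OF assms(2) rb] by auto
  show "vk n k j q' \<in> S1_minopen n (vk n k j q)" if "le2 n q' q" for q' j
  proof -
    have "R (code n k (fst q')) (code n k (fst q))" "R (code n k (snd q')) (code n k (snd q))"
      using code_R[OF assms(2) qa(1)] code_R[OF assms(2) qa(2)] that unfolding le2_def by auto
    then have "R (rho n j (code n k (fst q')) (code n k (snd q'))) (rho n j (code n k (fst q)) (code n k (snd q)))"
      by (rule r5)
    then show ?thesis unfolding vk_def by (rule c4[OF assms(2) rb])
  qed
qed

theorem theorem1:
  fixes n :: nat
  assumes "n > 2"
  shows "TC (S1 n) \<le> 3"
proof -
  define Q where "Q = (\<lambda>i. Carc n i \<times> Carc n i)"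
  have "(\<forall>i<3. has_motion_planner (S1 n) (Q i)) \<and>
        topspace (S1 n) \<times> topspace (S1 n) \<subseteq> (\<Union>i<3. Q i)"
  proof
    show "\<forall>i<3. has_motion_planner (S1 n) (Q i)"
      using arc_planner assms unfolding Q_def by auto
    show "topspace (S1 n) \<times> topspace (S1 n) \<subseteq> (\<Union>i<3. Q i)"
    proof
      fix z assume "z \<in> topspace (S1 n) \<times> topspace (S1 n)"
      then obtain a b where z: "z = (a,b)" "a \<in> S1_points n" "b \<in> S1_points n"
        using topspace_S1[of n] assms by auto
      have "\<exists>i<3. a \<noteq> (i,True) \<and> b \<noteq> (i,True)"
      proof (cases "a = (0,True) \<or> b = (0,True)")
        case False then show ?thesis by (intro exI[of _ 0]) auto
      next
        case True
        show ?thesis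
        proof (cases "a = (1,True) \<or> b = (1,True)")
          case False then show ?thesis by (intro exI[of _ 1]) auto
        next
          case True
          then have "a \<noteq> (2,True) \<and> b \<noteq> (2,True)" using \<open>a = (0,True) \<or> b = (0,True)\<close> by auto
          then show ?thesis by (intro exI[of _ 2]) auto
        qed
      qed
      then show "z \<in> (\<Union>i<3. Q i)" using z unfolding Q_def Carc_def by auto
    qed
  qed
  then show ?thesis unfolding TC_def by (intro Least_le) blast
qed

end
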